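(* Let $m\ge1$ and let $k_1\neq k_2$ be non-negative integers. For $k\in\{k_1,k_2\}$ let $\{f_1,\dots,f_{n(k)}\}$ be an $L^2(\mathbb{S}^m)$-orthonormal basis of the space $\mathcal{H}_k$ of spherical harmonics of order $k$ on $\mathbb{S}^m$ (restrictions to $\mathbb{S}^m$ of harmonic homogeneous polynomials of degree $k$ on $\mathbb{R}^{m+1}$), $n(k)=\dim\mathcal{H}_k$, and let $\varphi_k:\mathbb{S}^m\to\mathbb{S}^{n(k)-1}(1/\sqrt2)$ be the harmonic map $x\mapsto c(k)\,(f_1(x),\dots,f_{n(k)}(x))$, where $c(k)>0$ is the constant for which the image lies in the sphere of radius $1/\sqrt2$ centred at $0$ in $\mathbb{R}^{n(k)}$. Then the map $\varphi=\iota\circ(\varphi_{k_1},\varphi_{k_2}):\mathbb{S}^m\to\mathbb{S}^{n(k_1)+n(k_2)-1}$, with $\iota$ the canonical inclusion of $\mathbb{S}^{n(k_1)-1}(1/\sqrt2)\times\mathbb{S}^{n(k_2)-1}(1/\sqrt2)$ into the unit sphere $\mathbb{S}^{n(k_1)+n(k_2)-1}$, is proper biharmonic.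
   Context: $\mathbb{S}^n(r)$ is the round sphere of radius $r$ centred at $0$, $\mathbb{S}^m$ the unit sphere. For an orthonormal basis of $\mathcal{H}_k$ the function $\sum_i f_i^2$ is constant on $\mathbb{S}^m$, so $x\mapsto c(f_1(x),\dots,f_{n(k)}(x))$ maps into a centred round sphere (these are the standard minimal immersions). Proper biharmonic means vanishing bitension field $\tau_2(\varphi)=-\Delta\tau(\varphi)-\operatorname{trace}R^N(d\varphi\cdot,\tau(\varphi))d\varphi\cdot$ but nonvanishing tension field $\tau(\varphi)=\operatorname{trace}\nabla d\varphi$. *)

theory Defs
  imports "HOL-Analysis.Analysis"
begin

text \<open>Points and vectors of R^n are represented as functions
  nat \<Rightarrow> real, only indices i < n being relevant (the dimension varies inside
  the statement). Everything is computed extrinsically, with the spheres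
  embedded in Euclidean space; the Levi-Civita connection of a sphere and the
  pull-back connection are the tangential projections of ambient directional
  derivatives; functions/sections on the sphere are differentiated through
  their 0-homogeneous extension to R^d minus the origin.\<close>

definition ip :: "nat \<Rightarrow> (nat \<Rightarrow> real) \<Rightarrow> (nat \<Rightarrow> real) \<Rightarrow> real" where
  "ip n u v = (\<Sum>i<n. u i * v i)"

definition unitvec :: "nat \<Rightarrow> nat \<Rightarrow> real" where
  "unitvec j = (\<lambda>i. if i = j then 1 else 0)"

definition sph :: "nat \<Rightarrow> real \<Rightarrow> (nat \<Rightarrow> real) set" where
  "sph n r = {x. (\<forall>i\<ge>n. x i = 0) \<and> ip n x x = r ^ 2}"

definition ptan :: "nat \<Rightarrow> (nat \<Rightarrow> real) \<Rightarrow> (nat \<Rightarrow> real) \<Rightarrow> (nat \<Rightarrow> real)" where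
  "ptan n y v = (\<lambda>i. v i - ip n v y * y i)"

definition partial :: "nat \<Rightarrow> ((nat \<Rightarrow> real) \<Rightarrow> real) \<Rightarrow> (nat \<Rightarrow> real) \<Rightarrow> real" where
  "partial j F x = deriv (\<lambda>t. F (x(j := x j + t))) 0"

definition dirderiv :: "nat \<Rightarrow> ((nat \<Rightarrow> real) \<Rightarrow> real) \<Rightarrow> (nat \<Rightarrow> real) \<Rightarrow> (nat \<Rightarrow> real) \<Rightarrow> real" where
  "dirderiv d F x v = (\<Sum>l<d. v l * partial l F x)"

definition vdir :: "nat \<Rightarrow> ((nat \<Rightarrow> real) \<Rightarrow> (nat \<Rightarrow> real)) \<Rightarrow> (nat \<Rightarrow> real) \<Rightarrow> (nat \<Rightarrow> real) \<Rightarrow> (nat \<Rightarrow> real)" where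
  "vdir d V x v = (\<lambda>i. dirderiv d (\<lambda>z. V z i) x v)"

definition radproj :: "nat \<Rightarrow> (nat \<Rightarrow> real) \<Rightarrow> (nat \<Rightarrow> real)" where
  "radproj d x = (\<lambda>i. if i < d then x i / sqrt (ip d x x) else 0)"

definition hom0 :: "nat \<Rightarrow> ((nat \<Rightarrow> real) \<Rightarrow> 'b) \<Rightarrow> (nat \<Rightarrow> real) \<Rightarrow> 'b" where
  "hom0 d F x = F (radproj d x)"

definition dmap :: "nat \<Rightarrow> ((nat \<Rightarrow> real) \<Rightarrow> (nat \<Rightarrow> real)) \<Rightarrow> (nat \<Rightarrow> real) \<Rightarrow> (nat \<Rightarrow> real) \<Rightarrow> (nat \<Rightarrow> real)" where
  "dmap d \<phi> x v = vdir d (hom0 d \<phi>) x v"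

definition conn :: "nat \<Rightarrow> nat \<Rightarrow> ((nat \<Rightarrow> real) \<Rightarrow> (nat \<Rightarrow> real)) \<Rightarrow> ((nat \<Rightarrow> real) \<Rightarrow> (nat \<Rightarrow> real))
     \<Rightarrow> (nat \<Rightarrow> real) \<Rightarrow> (nat \<Rightarrow> real) \<Rightarrow> (nat \<Rightarrow> real)" where
  "conn d N \<phi> V x X = ptan N (\<phi> x) (vdir d (hom0 d V) x X)"

definition lc :: "nat \<Rightarrow> ((nat \<Rightarrow> real) \<Rightarrow> (nat \<Rightarrow> real)) \<Rightarrow> (nat \<Rightarrow> real) \<Rightarrow> (nat \<Rightarrow> real) \<Rightarrow> (nat \<Rightarrow> real)" where
  "lc d Y x X = ptan d x (vdir d (hom0 d Y) x X)"

text \<open>Tangent vector field on S^(d-1) extending the tangent vector Y (at a point where it is tangent).\<close>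
definition tfield :: "nat \<Rightarrow> (nat \<Rightarrow> real) \<Rightarrow> (nat \<Rightarrow> real) \<Rightarrow> (nat \<Rightarrow> real)" where
  "tfield d Y = (\<lambda>z. ptan d z Y)"

definition tr :: "nat \<Rightarrow> (nat \<Rightarrow> real) \<Rightarrow> ((nat \<Rightarrow> real) \<Rightarrow> (nat \<Rightarrow> real) \<Rightarrow> (nat \<Rightarrow> real)) \<Rightarrow> (nat \<Rightarrow> real)" where
  "tr d x B = (\<lambda>i. \<Sum>j<d. B (ptan d x (unitvec j)) (ptan d x (unitvec j)) i)"

definition sff :: "nat \<Rightarrow> nat \<Rightarrow> ((nat \<Rightarrow> real) \<Rightarrow> (nat \<Rightarrow> real)) \<Rightarrow> (nat \<Rightarrow> real)
     \<Rightarrow> (nat \<Rightarrow> real) \<Rightarrow> (nat \<Rightarrow> real) \<Rightarrow> (nat \<Rightarrow> real)" where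
  "sff d N \<phi> x X Y = (\<lambda>i. conn d N \<phi> (\<lambda>z. dmap d \<phi> z (tfield d Y z)) x X i
                            - dmap d \<phi> x (lc d (tfield d Y) x X) i)"

definition tension :: "nat \<Rightarrow> nat \<Rightarrow> ((nat \<Rightarrow> real) \<Rightarrow> (nat \<Rightarrow> real)) \<Rightarrow> (nat \<Rightarrow> real) \<Rightarrow> (nat \<Rightarrow> real)" where
  "tension d N \<phi> x = tr d x (sff d N \<phi> x)"

definition hess_sec :: "nat \<Rightarrow> nat \<Rightarrow> ((nat \<Rightarrow> real) \<Rightarrow> (nat \<Rightarrow> real)) \<Rightarrow> ((nat \<Rightarrow> real) \<Rightarrow> (nat \<Rightarrow> real))
     \<Rightarrow> (nat \<Rightarrow> real) \<Rightarrow> (nat \<Rightarrow> real) \<Rightarrow> (nat \<Rightarrow> real) \<Rightarrow> (nat \<Rightarrow> real)" where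
  "hess_sec d N \<phi> V x X Y = (\<lambda>i. conn d N \<phi> (\<lambda>z. conn d N \<phi> V z (tfield d Y z)) x X i
                                  - conn d N \<phi> V x (lc d (tfield d Y) x X) i)"

definition rough_lap :: "nat \<Rightarrow> nat \<Rightarrow> ((nat \<Rightarrow> real) \<Rightarrow> (nat \<Rightarrow> real)) \<Rightarrow> ((nat \<Rightarrow> real) \<Rightarrow> (nat \<Rightarrow> real))
     \<Rightarrow> (nat \<Rightarrow> real) \<Rightarrow> (nat \<Rightarrow> real)" where
  "rough_lap d N \<phi> V x = (\<lambda>i. - tr d x (hess_sec d N \<phi> V x) i)"

text \<open>Riemann curvature tensor of the unit sphere S^(N-1) (sectional curvature 1),
  with the convention R(X,Y) = [nabla_X, nabla_Y] - nabla_[X,Y].\<close>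
definition curv_sph :: "nat \<Rightarrow> (nat \<Rightarrow> real) \<Rightarrow> (nat \<Rightarrow> real) \<Rightarrow> (nat \<Rightarrow> real) \<Rightarrow> (nat \<Rightarrow> real)" where
  "curv_sph N X Y Z = (\<lambda>i. ip N Y Z * X i - ip N X Z * Y i)"

definition bitension :: "nat \<Rightarrow> nat \<Rightarrow> ((nat \<Rightarrow> real) \<Rightarrow> (nat \<Rightarrow> real)) \<Rightarrow> (nat \<Rightarrow> real) \<Rightarrow> (nat \<Rightarrow> real)" where
  "bitension d N \<phi> x = (\<lambda>i. - rough_lap d N \<phi> (tension d N \<phi>) x i
      - tr d x (\<lambda>X Y. curv_sph N (dmap d \<phi> x X) (tension d N \<phi> x) (dmap d \<phi> x Y)) i)"

definition proper_biharmonic :: "nat \<Rightarrow> nat \<Rightarrow> ((nat \<Rightarrow> real) \<Rightarrow> (nat \<Rightarrow> real)) \<Rightarrow> bool" where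
  "proper_biharmonic d N \<phi> \<longleftrightarrow>
     (\<forall>x\<in>sph d 1. \<phi> x \<in> sph N 1) \<and>
     (\<forall>x\<in>sph d 1. \<forall>i<N. bitension d N \<phi> x i = 0) \<and>
     (\<exists>x\<in>sph d 1. \<exists>i<N. tension d N \<phi> x i \<noteq> 0)"

definition multi_idx :: "nat \<Rightarrow> nat \<Rightarrow> (nat \<Rightarrow> nat) set" where
  "multi_idx d k = {\<alpha>. (\<forall>i\<ge>d. \<alpha> i = 0) \<and> (\<Sum>i<d. \<alpha> i) = k}"

definition hom_poly :: "nat \<Rightarrow> nat \<Rightarrow> ((nat \<Rightarrow> real) \<Rightarrow> real) \<Rightarrow> bool" where
  "hom_poly d k p \<longleftrightarrow> (\<exists>c. \<forall>x. p x = (\<Sum>\<alpha>\<in>multi_idx d k. c \<alpha> * (\<Prod>i<d. x i ^ \<alpha> i)))"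

definition harmonic_fun :: "nat \<Rightarrow> ((nat \<Rightarrow> real) \<Rightarrow> real) \<Rightarrow> bool" where
  "harmonic_fun d p \<longleftrightarrow> (\<forall>x. (\<Sum>j<d. partial j (partial j p) x) = 0)"

definition sph_harm :: "nat \<Rightarrow> nat \<Rightarrow> ((nat \<Rightarrow> real) \<Rightarrow> real) set" where
  "sph_harm d k = {f. \<exists>p. hom_poly d k p \<and> harmonic_fun d p \<and> (\<forall>x\<in>sph d 1. f x = p x)}"

text \<open>Integral over S^(d-1) with respect to the Riemannian measure, via the
  cone formula: int_S f d sigma = d * int_{unit ball} f(y/|y|) dy.\<close>
definition sph_integral :: "nat \<Rightarrow> ((nat \<Rightarrow> real) \<Rightarrow> real) \<Rightarrow> real" where
  "sph_integral d f = real d * (\<integral>y. indicator {y. ip d y y \<le> 1} y * f (radproj d y)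
                                    \<partial>(PiM {..<d} (\<lambda>_. lborel)))"

definition L2_ip :: "nat \<Rightarrow> ((nat \<Rightarrow> real) \<Rightarrow> real) \<Rightarrow> ((nat \<Rightarrow> real) \<Rightarrow> real) \<Rightarrow> real" where
  "L2_ip d f g = sph_integral d (\<lambda>x. f x * g x)"

definition sph_harm_onb :: "nat \<Rightarrow> nat \<Rightarrow> ((nat \<Rightarrow> real) \<Rightarrow> real) list \<Rightarrow> bool" where
  "sph_harm_onb d k fs \<longleftrightarrow>
     (\<forall>f\<in>set fs. f \<in> sph_harm d k) \<and>
     (\<forall>i<length fs. \<forall>j<length fs. L2_ip d (fs ! i) (fs ! j) = (if i = j then 1 else 0)) \<and>
     (\<forall>f\<in>sph_harm d k. \<exists>a. \<forall>x\<in>sph d 1. f x = (\<Sum>i<length fs. a i * (fs ! i) x))"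

definition pair_map :: "real \<Rightarrow> ((nat \<Rightarrow> real) \<Rightarrow> real) list \<Rightarrow> real \<Rightarrow> ((nat \<Rightarrow> real) \<Rightarrow> real) list
     \<Rightarrow> (nat \<Rightarrow> real) \<Rightarrow> (nat \<Rightarrow> real)" where
  "pair_map c1 fs1 c2 fs2 x = (\<lambda>i. if i < length fs1 then c1 * (fs1 ! i) x
      else if i < length fs1 + length fs2 then c2 * (fs2 ! (i - length fs1)) x else 0)"

end

theory Submission
  imports Defs
begin


inductive pol :: "nat \<Rightarrow> ((nat \<Rightarrow> real) \<Rightarrow> real) \<Rightarrow> bool" for d where
  pconst: "pol d (\<lambda>x. c)"
| pvar: "i < d \<Longrightarrow> pol d (\<lambda>x. x i)"
| padd: "pol d f \<Longrightarrow> pol d g \<Longrightarrow> pol d (\<lambda>x. f x + g x)"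
| pmul: "pol d f \<Longrightarrow> pol d g \<Longrightarrow> pol d (\<lambda>x. f x * g x)"

lemma deriv_eq: "(f has_real_derivative X) F \<Longrightarrow> X = Y \<Longrightarrow> (f has_real_derivative Y) F" by simp

lemma line_coord: "((\<lambda>t. (y(j := y j + t)) l) has_real_derivative (if l = j then 1 else 0)) (at t0)"
  by (cases "l = j") (auto intro!: derivative_eq_intros)

lemma partial_eqI: "((\<lambda>t. f (y(j := y j + t))) has_real_derivative D) (at 0) \<Longrightarrow> partial j f y = D"
  by (simp add: partial_def DERIV_imp_deriv)

lemma partial_const[simp]: "partial j (\<lambda>x. c) y = 0"
  by (rule partial_eqI) (rule DERIV_const)

lemma partial_var[simp]: "partial j (\<lambda>x. x i) y = (if i = j then 1 else 0)"
  by (rule partial_eqI) (rule line_coord)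

definition lsm :: "((nat \<Rightarrow> real) \<Rightarrow> real) \<Rightarrow> bool" where
  "lsm f \<longleftrightarrow> (\<forall>y j. ((\<lambda>t. f (y(j := y j + t))) has_real_derivative partial j f y) (at 0))"

lemma lsmD: "lsm f \<Longrightarrow> ((\<lambda>t. f (y(j := y j + t))) has_real_derivative partial j f y) (at 0)"
  by (simp add: lsm_def)

lemma lsm_const[simp]: "lsm (\<lambda>x. c)"
  by (simp add: lsm_def)

lemma lsm_var[simp]: "lsm (\<lambda>x. x i)"
  unfolding lsm_def by (intro allI deriv_eq[OF line_coord]) simp

lemma partial_add[simp]: "lsm f \<Longrightarrow> lsm g \<Longrightarrow>
   partial j (\<lambda>x. f x + g x) y = partial j f y + partial j g y"
  by (rule partial_eqI) (intro DERIV_add lsmD)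

lemma partial_diff[simp]: "lsm f \<Longrightarrow> lsm g \<Longrightarrow>
   partial j (\<lambda>x. f x - g x) y = partial j f y - partial j g y"
  by (rule partial_eqI) (intro DERIV_diff lsmD)

lemma partial_mult[simp]: "lsm f \<Longrightarrow> lsm g \<Longrightarrow>
   partial j (\<lambda>x. f x * g x) y = partial j f y * g y + f y * partial j g y"
proof -
  assume a: "lsm f" "lsm g"
  show ?thesis
    using DERIV_mult'[OF lsmD[OF a(1), of y j] lsmD[OF a(2), of y j]]
    by (drule_tac partial_eqI) (simp add: algebra_simps)
qed

lemma lsm_add[simp]: "lsm f \<Longrightarrow> lsm g \<Longrightarrow> lsm (\<lambda>x. f x + g x)"
  unfolding lsm_def[of "\<lambda>x. f x + g x"]
  by (intro allI deriv_eq[OF DERIV_add[OF lsmD lsmD]]) auto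

lemma lsm_diff[simp]: "lsm f \<Longrightarrow> lsm g \<Longrightarrow> lsm (\<lambda>x. f x - g x)"
  unfolding lsm_def[of "\<lambda>x. f x - g x"]
  by (intro allI deriv_eq[OF DERIV_diff[OF lsmD lsmD]]) auto

lemma lsm_mult[simp]: "lsm f \<Longrightarrow> lsm g \<Longrightarrow> lsm (\<lambda>x. f x * g x)"
proof -
  assume a: "lsm f" "lsm g"
  show ?thesis unfolding lsm_def
  proof (intro allI)
    fix y j
    show "((\<lambda>t. f (y(j := y j + t)) * g (y(j := y j + t))) has_real_derivative partial j (\<lambda>x. f x * g x) y) (at 0)"
      by (rule deriv_eq[OF DERIV_mult'[OF lsmD[OF a(1), of y j] lsmD[OF a(2), of y j]]])
         (simp add: a algebra_simps)
  qed
qed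

lemma lsm_sum_aux: "finite A \<Longrightarrow> (\<forall>a\<in>A. lsm (f a)) \<Longrightarrow> lsm (\<lambda>x. \<Sum>a\<in>A. f a x)"
proof (induction A rule: finite_induct)
  case empty
  then show ?case by simp
next
  case (insert a F)
  then have "lsm (\<lambda>x. f a x + (\<Sum>a\<in>F. f a x))" by (intro lsm_add) auto
  then show ?case using insert by simp
qed

lemma lsm_sum[simp]: "\<forall>a\<in>A. lsm (f a) \<Longrightarrow> lsm (\<lambda>x. \<Sum>a\<in>A. f a x)"
  by (cases "finite A") (auto intro: lsm_sum_aux)

lemma partial_sum[simp]: "\<forall>a\<in>A. lsm (f a) \<Longrightarrow>
   partial j (\<lambda>x. \<Sum>a\<in>A. f a x) y = (\<Sum>a\<in>A. partial j (f a) y)"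
proof (cases "finite A")
  case True
  assume "\<forall>a\<in>A. lsm (f a)"
  then show ?thesis using True
    by (intro partial_eqI DERIV_sum lsmD) auto
next
  case False
  then show ?thesis by simp
qed

lemma lsm_power[simp]: "lsm f \<Longrightarrow> lsm (\<lambda>x. f x ^ n)"
  by (induction n) (auto simp del: power_Suc simp add: power_Suc[of "f _"])

lemma partial_power[simp]: "lsm f \<Longrightarrow>
   partial j (\<lambda>x. f x ^ n) y = real n * f y ^ (n - 1) * partial j f y"
  by (rule partial_eqI) (auto intro!: derivative_eq_intros lsmD)

lemma pol_lsm: "pol d f \<Longrightarrow> lsm f"
  by (induction rule: pol.induct) auto

lemma pol_line: "pol d f \<Longrightarrow> ((\<lambda>t. f (y(j := y j + t))) has_real_derivative partial j f y) (at 0)"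
  by (rule lsmD[OF pol_lsm])

lemma pol_diff[intro]: "pol d f \<Longrightarrow> pol d g \<Longrightarrow> pol d (\<lambda>x. f x - g x)"
proof -
  assume a: "pol d f" "pol d g"
  have "pol d (\<lambda>x. f x + (\<lambda>x. -1) x * g x)" using a by (intro pol.intros)
  then show ?thesis by simp
qed

lemma pol_sum[intro]: "(\<And>a. a \<in> A \<Longrightarrow> pol d (f a)) \<Longrightarrow> pol d (\<lambda>x. \<Sum>a\<in>A. f a x)"
proof (cases "finite A")
  case True
  assume "\<And>a. a \<in> A \<Longrightarrow> pol d (f a)"
  with True show ?thesis
  proof (induction A rule: finite_induct)
    case empty
    then show ?case using pconst[of d 0] by simp
  next
    case (insert a F)
    then have "pol d (\<lambda>x. f a x + (\<Sum>a\<in>F. f a x))"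
      by (intro padd) auto
    then show ?case using insert by simp
  qed
next
  case False
  then show ?thesis using pconst[of d 0] by simp
qed

lemma pol_prod[intro]: "(\<And>a. a \<in> A \<Longrightarrow> pol d (f a)) \<Longrightarrow> pol d (\<lambda>x. \<Prod>a\<in>A. f a x)"
proof (cases "finite A")
  case True
  assume "\<And>a. a \<in> A \<Longrightarrow> pol d (f a)"
  with True show ?thesis
  proof (induction A rule: finite_induct)
    case empty
    then show ?case using pconst[of d 1] by simp
  next
    case (insert a F)
    then have "pol d (\<lambda>x. f a x * (\<Prod>a\<in>F. f a x))"
      by (intro pmul) auto
    then show ?case using insert by simp
  qed
next
  case False
  then show ?thesis using pconst[of d 1] by simp
qed

lemma pol_power[intro]: "pol d f \<Longrightarrow> pol d (\<lambda>x. f x ^ n)"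
proof (induction n)
  case 0
  then show ?case using pconst[of d 1] by simp
next
  case (Suc n)
  then have "pol d (\<lambda>x. f x * f x ^ n)" by (intro pmul)
  then show ?case by simp
qed

lemma pol_partial[intro]: "pol d f \<Longrightarrow> pol d (partial j f)"
proof (induction rule: pol.induct)
  case (pconst c)
  then show ?case by (simp add: pol.intros)
next
  case (pvar i)
  then show ?case by (simp add: pol.intros)
next
  case (padd f g)
  then have "partial j (\<lambda>x. f x + g x) = (\<lambda>y. partial j f y + partial j g y)"
    using pol_lsm[OF padd.hyps(1)] pol_lsm[OF padd.hyps(2)] by (intro ext) simp
  then show ?case using padd by (simp add: pol.intros)
next
  case (pmul f g)
  then have "partial j (\<lambda>x. f x * g x) = (\<lambda>y. partial j f y * g y + f y * partial j g y)"
    using pol_lsm[OF pmul.hyps(1)] pol_lsm[OF pmul.hyps(2)] by (intro ext) simp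
  then show ?case using pmul by (simp add: pol.intros)
qed

definition polA :: "((nat \<Rightarrow> real) \<Rightarrow> real) \<Rightarrow> bool" where
  "polA f \<longleftrightarrow> (\<exists>d. pol d f)"

lemma polA_lsm[simp]: "polA f \<Longrightarrow> lsm f"
  by (auto simp: polA_def intro: pol_lsm)

lemma polA_partial[simp]: "polA f \<Longrightarrow> polA (partial j f)"
  by (auto simp: polA_def)

lemma polAI: "pol d f \<Longrightarrow> polA f"
  by (auto simp: polA_def)

lemma pol_chain: "pol d f \<Longrightarrow> (\<And>i. i < d \<Longrightarrow> ((\<lambda>t. \<gamma> t i) has_real_derivative \<gamma>' i) (at t0)) \<Longrightarrow>
  ((\<lambda>t. f (\<gamma> t)) has_real_derivative (\<Sum>i<d. \<gamma>' i * partial i f (\<gamma> t0))) (at t0)"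
proof (induction rule: pol.induct)
  case (pconst c)
  then show ?case by (simp add: DERIV_const)
next
  case (pvar i)
  have "(\<Sum>l<d. \<gamma>' l * partial l (\<lambda>x. x i) (\<gamma> t0)) = \<gamma>' i"
    using pvar by (simp add: if_distrib[where f="\<lambda>z. _ * z"] cong: if_cong)
  then show ?case using pvar by simp
next
  case (padd f g)
  have "((\<lambda>t. f (\<gamma> t) + g (\<gamma> t)) has_real_derivative
     (\<Sum>i<d. \<gamma>' i * partial i f (\<gamma> t0)) + (\<Sum>i<d. \<gamma>' i * partial i g (\<gamma> t0))) (at t0)"
    using padd by (intro DERIV_add) auto
  moreover have "(\<Sum>i<d. \<gamma>' i * partial i f (\<gamma> t0)) + (\<Sum>i<d. \<gamma>' i * partial i g (\<gamma> t0))
     = (\<Sum>i<d. \<gamma>' i * partial i (\<lambda>x. f x + g x) (\<gamma> t0))"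
    using padd pol_lsm[OF padd.hyps(1)] pol_lsm[OF padd.hyps(2)] by (simp add: sum.distrib[symmetric] algebra_simps)
  ultimately show ?case by simp
next
  case (pmul f g)
  have h1: "((\<lambda>t. f (\<gamma> t)) has_real_derivative (\<Sum>i<d. \<gamma>' i * partial i f (\<gamma> t0))) (at t0)"
    using pmul.IH(1) pmul.prems by blast
  have h2: "((\<lambda>t. g (\<gamma> t)) has_real_derivative (\<Sum>i<d. \<gamma>' i * partial i g (\<gamma> t0))) (at t0)"
    using pmul.IH(2) pmul.prems by blast
  have "((\<lambda>t. f (\<gamma> t) * g (\<gamma> t)) has_real_derivative
     (\<Sum>i<d. \<gamma>' i * partial i f (\<gamma> t0)) * g (\<gamma> t0) + f (\<gamma> t0) * (\<Sum>i<d. \<gamma>' i * partial i g (\<gamma> t0))) (at t0)"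
    by (rule deriv_eq[OF DERIV_mult'[OF h1 h2]]) (rule add.commute)
  moreover have "(\<Sum>i<d. \<gamma>' i * partial i f (\<gamma> t0)) * g (\<gamma> t0) + f (\<gamma> t0) * (\<Sum>i<d. \<gamma>' i * partial i g (\<gamma> t0))
     = (\<Sum>i<d. \<gamma>' i * partial i (\<lambda>x. f x * g x) (\<gamma> t0))"
    using pmul pol_lsm[OF pmul.hyps(1)] pol_lsm[OF pmul.hyps(2)] by (simp add: sum.distrib[symmetric] sum_distrib_left sum_distrib_right algebra_simps)
  ultimately show ?case by simp
qed



lemma if1_mult[simp]: "(if P then 1 else 0) * (a::real) = (if P then a else 0)" by simp
lemma mult_if1[simp]: "(a::real) * (if P then 1 else 0) = (if P then a else 0)" by simp

lemma mult_if0[simp]: "(c::real) * (if P then a else 0) = (if P then c * a else 0)" by simp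

lemma sphD: "x \<in> sph d r \<Longrightarrow> ip d x x = r^2" "x \<in> sph d r \<Longrightarrow> i \<ge> d \<Longrightarrow> x i = 0"
  by (auto simp: sph_def)

lemma radproj_sph: "x \<in> sph d 1 \<Longrightarrow> radproj d x = x"
  by (auto simp: radproj_def sphD intro!: ext)

lemma radproj_in_sph: assumes "ip d y y > 0" shows "radproj d y \<in> sph d 1"
proof -
  have "ip d (radproj d y) (radproj d y) = (\<Sum>i<d. y i * y i) / (sqrt (ip d y y))^2"
    by (simp add: ip_def radproj_def sum_divide_distrib power2_eq_square)
  also have "\<dots> = 1" using assms by (simp add: ip_def)
  finally show ?thesis by (auto simp: sph_def radproj_def)
qed

lemma pol_ip: "pol d (\<lambda>y. ip d y y)"
  unfolding ip_def by (intro pol_sum pmul pvar) auto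

lemma ip_line_deriv: assumes "l < d"
  shows "((\<lambda>t. ip d (x(l := x l + t)) (x(l := x l + t))) has_real_derivative 2 * x l) (at 0)"
proof -
  have "((\<lambda>t. (\<lambda>y. ip d y y) (x(l := x l + t))) has_real_derivative partial l (\<lambda>y. ip d y y) x) (at 0)"
    by (rule pol_line[OF pol_ip])
  moreover have "partial l (\<lambda>y. ip d y y) x = 2 * x l"
    using assms unfolding ip_def by (simp add: sum.distrib)
  ultimately show ?thesis by simp
qed

lemma radproj_line:
  assumes x: "x \<in> sph d 1" and l: "l < d" and i: "i < d"
  shows "((\<lambda>t. radproj d (x(l := x l + t)) i) has_real_derivative (if i = l then 1 else 0) - x i * x l) (at 0)"
proof -
  have ipx: "ip d x x = 1" using sphD[OF x] by simp
  have g0: "ip d (x(l := x l + 0)) (x(l := x l + 0)) = 1" using ipx by simp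
  have d1: "DERIV sqrt (ip d (x(l := x l + 0)) (x(l := x l + 0))) :> inverse (sqrt 1) / 2"
    using DERIV_real_sqrt[of 1] g0 by simp
  have s: "((\<lambda>t. sqrt (ip d (x(l := x l + t)) (x(l := x l + t)))) has_real_derivative inverse (sqrt 1) / 2 * (2 * x l)) (at 0)"
    by (rule DERIV_chain2[OF d1 ip_line_deriv[OF l]])
  have "((\<lambda>t. (x(l := x l + t)) i / sqrt (ip d (x(l := x l + t)) (x(l := x l + t)))) has_real_derivative
      (if i = l then 1 else 0) - x i * x l) (at 0)"
    by (rule deriv_eq[OF DERIV_divide[OF line_coord s]]) (auto simp: g0 ipx)
  then show ?thesis using i by (simp add: radproj_def)
qed

lemma hom0_partial:
  assumes x: "x \<in> sph d 1" and G: "pol d G" and FG: "\<forall>z\<in>sph d 1. F z = G z" and l: "l < d"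
  shows "partial l (hom0 d F) x = (\<Sum>i<d. ((if i = l then 1 else 0) - x i * x l) * partial i G x)"
proof -
  define f where "f = (\<lambda>t. ip d (x(l := x l + t)) (x(l := x l + t)))"
  have ipx: "ip d x x = 1" using sphD[OF x] by simp
  have "isCont f 0" unfolding f_def by (rule DERIV_isCont[OF ip_line_deriv[OF l]])
  then have "(f \<longlongrightarrow> f 0) (nhds 0)" by (simp add: isCont_def tendsto_at_iff_tendsto_nhds)
  moreover have "f 0 = 1" using ipx by (simp add: f_def)
  ultimately have ev: "eventually (\<lambda>t. 0 < f t) (nhds 0)"
    by (metis order_tendstoD(1) zero_less_one)
  have ev2: "eventually (\<lambda>t. hom0 d F (x(l := x l + t)) = G (radproj d (x(l := x l + t)))) (nhds 0)"
    using ev by eventually_elim (use FG radproj_in_sph in \<open>auto simp: f_def hom0_def\<close>)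
  have "((\<lambda>t. G (radproj d (x(l := x l + t)))) has_real_derivative
        (\<Sum>i<d. ((if i = l then 1 else 0) - x i * x l) * partial i G (radproj d (x(l := x l + 0))))) (at 0)"
    by (rule pol_chain[OF G radproj_line[OF x l]])
  then have "((\<lambda>t. G (radproj d (x(l := x l + t)))) has_real_derivative
        (\<Sum>i<d. ((if i = l then 1 else 0) - x i * x l) * partial i G x)) (at 0)"
    using radproj_sph[OF x] by simp
  then have "((\<lambda>t. hom0 d F (x(l := x l + t))) has_real_derivative
        (\<Sum>i<d. ((if i = l then 1 else 0) - x i * x l) * partial i G x)) (at 0)"
    using DERIV_cong_ev[OF refl ev2 refl] by blast
  then show ?thesis by (rule partial_eqI)
qed

lemma hom0_dirderiv:
  assumes x: "x \<in> sph d 1" and G: "pol d G" and FG: "\<forall>z\<in>sph d 1. F z = G z"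
  shows "dirderiv d (hom0 d F) x X = (\<Sum>i<d. ptan d x X i * partial i G x)"
proof -
  have "dirderiv d (hom0 d F) x X = (\<Sum>l<d. X l * (\<Sum>i<d. ((if i = l then 1 else 0) - x i * x l) * partial i G x))"
    unfolding dirderiv_def using hom0_partial[OF x G FG] by simp
  also have "\<dots> = (\<Sum>l<d. \<Sum>i<d. X l * ((if i = l then 1 else 0) - x i * x l) * partial i G x)"
    by (simp add: sum_distrib_left mult.assoc)
  also have "\<dots> = (\<Sum>i<d. \<Sum>l<d. X l * ((if i = l then 1 else 0) - x i * x l) * partial i G x)"
    by (rule sum.swap)
  also have "\<dots> = (\<Sum>i<d. (\<Sum>l<d. X l * ((if i = l then 1 else 0) - x i * x l)) * partial i G x)"
    by (simp add: sum_distrib_right)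
  also have "\<dots> = (\<Sum>i<d. ptan d x X i * partial i G x)"
  proof (rule sum.cong[OF refl])
    fix i assume i: "i \<in> {..<d}"
    have "(\<Sum>l<d. X l * ((if i = l then 1 else 0) - x i * x l)) = (\<Sum>l<d. (if i = l then X l else 0) - X l * x l * x i)"
      by (rule sum.cong) (auto simp: algebra_simps)
    also have "\<dots> = X i - ip d X x * x i"
      using i by (simp add: sum_subtractf ip_def sum_distrib_right)
    finally show "(\<Sum>l<d. X l * ((if i = l then 1 else 0) - x i * x l)) * partial i G x = ptan d x X i * partial i G x"
      by (simp add: ptan_def)
  qed
  finally show ?thesis .
qed

lemma hom0_vdir:
  assumes x: "x \<in> sph d 1" and G: "pol d G" and FG: "\<forall>z\<in>sph d 1. V z i = G z"
  shows "vdir d (hom0 d V) x X i = (\<Sum>j<d. ptan d x X j * partial j G x)"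
proof -
  have e: "(\<lambda>z. hom0 d V z i) = hom0 d (\<lambda>z. V z i)"
    by (rule ext) (simp add: hom0_def)
  have "vdir d (hom0 d V) x X i = dirderiv d (hom0 d (\<lambda>z. V z i)) x X"
    by (simp add: vdir_def e)
  then show ?thesis using hom0_dirderiv[OF x G, of "\<lambda>z. V z i"] FG by simp
qed



lemma lsm_ip[simp]: "lsm (\<lambda>y. ip d y y)"
  by (rule pol_lsm[OF pol_ip])

lemma partial_ip[simp]: "l < d \<Longrightarrow> partial l (\<lambda>y. ip d y y) x = 2 * x l"
  unfolding ip_def by (simp add: sum.distrib)

lemma lsm_divc[simp]: "lsm f \<Longrightarrow> lsm (\<lambda>x. f x / c)"
proof -
  assume "lsm f"
  then have "lsm (\<lambda>x. f x * (\<lambda>x. 1 / c) x)" by (intro lsm_mult) auto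
  then show ?thesis by simp
qed

lemma partial_divc[simp]: "lsm f \<Longrightarrow> partial j (\<lambda>x. f x / c) y = partial j f y / c"
proof -
  assume a: "lsm f"
  show ?thesis using partial_mult[OF a lsm_const[of "1/c"], of j y] by simp
qed

lemma pol_partial_comm: "pol d f \<Longrightarrow> partial h (partial l f) = partial l (partial h f)"
proof (induction rule: pol.induct)
  case (pconst c)
  then show ?case by (simp add: fun_eq_iff)
next
  case (pvar i)
  then show ?case by (simp add: fun_eq_iff)
next
  case (padd f g)
  have l: "lsm f" "lsm g" "lsm (partial l f)" "lsm (partial l g)" "lsm (partial h f)" "lsm (partial h g)"
    using padd.hyps by (auto intro!: pol_lsm pol_partial)
  have "partial l (\<lambda>x. f x + g x) = (\<lambda>y. partial l f y + partial l g y)"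
       "partial h (\<lambda>x. f x + g x) = (\<lambda>y. partial h f y + partial h g y)"
    using l by (auto simp: fun_eq_iff)
  then show ?case using l padd.IH by (simp add: fun_eq_iff)
next
  case (pmul f g)
  have l: "lsm f" "lsm g" "lsm (partial l f)" "lsm (partial l g)" "lsm (partial h f)" "lsm (partial h g)"
    using pmul.hyps by (auto intro!: pol_lsm pol_partial)
  have "partial l (\<lambda>x. f x * g x) = (\<lambda>y. partial l f y * g y + f y * partial l g y)"
       "partial h (\<lambda>x. f x * g x) = (\<lambda>y. partial h f y * g y + f y * partial h g y)"
    using l by (auto simp: fun_eq_iff)
  then show ?case using l pmul.IH by (simp add: fun_eq_iff algebra_simps)
qed

lemma ptan_tangent: "x \<in> sph d 1 \<Longrightarrow> ip d (ptan d x Y) x = 0"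
proof -
  assume x: "x \<in> sph d 1"
  have "ip d (ptan d x Y) x = ip d Y x - ip d Y x * ip d x x"
    by (simp add: ip_def ptan_def left_diff_distrib sum_subtractf sum_distrib_left mult.assoc)
  then show ?thesis using sphD(1)[OF x] by simp
qed

lemma ptan_idem: "x \<in> sph d 1 \<Longrightarrow> ptan d x (ptan d x Y) = ptan d x Y"
  using ptan_tangent by (simp add: ptan_def[of d x "ptan d x Y"])

lemma ptan_of_tangent: "ip d Y x = 0 \<Longrightarrow> ptan d x Y = Y"
  by (simp add: ptan_def)

definition E :: "nat \<Rightarrow> (nat \<Rightarrow> real) \<Rightarrow> nat \<Rightarrow> nat \<Rightarrow> real" where
  "E d x j = ptan d x (unitvec j)"

lemma E_eq: "j < d \<Longrightarrow> E d x j h = (if h = j then 1 else 0) - x j * x h"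
  by (simp add: E_def ptan_def ip_def unitvec_def)

lemma Ev: "x \<in> sph d 1 \<Longrightarrow> j < d \<Longrightarrow> (\<Sum>h<d. E d x j h * a h) = a j - x j * (\<Sum>h<d. x h * a h)"
  by (simp add: E_eq left_diff_distrib sum_subtractf sum_distrib_left mult.assoc)

lemma E_tangent: "x \<in> sph d 1 \<Longrightarrow> ip d (E d x j) x = 0"
  by (simp add: E_def ptan_tangent)

lemma ptan_E: "x \<in> sph d 1 \<Longrightarrow> ptan d x (E d x j) = E d x j"
  by (simp add: E_def ptan_idem)



locale bih =
  fixes d N n1 :: nat and Q :: "nat \<Rightarrow> (nat \<Rightarrow> real) \<Rightarrow> real" and \<kappa> :: "nat \<Rightarrow> nat"
    and \<phi> :: "(nat \<Rightarrow> real) \<Rightarrow> (nat \<Rightarrow> real)" and k1 k2 :: nat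
  assumes d2: "2 \<le> d"
    and n1N: "n1 \<le> N"
    and polQ: "\<And>i. pol d (Q i)"
    and Qzero: "\<And>i. N \<le> i \<Longrightarrow> Q i = (\<lambda>x. 0)"
    and kap: "\<And>i. \<kappa> i = (if i < n1 then k1 else k2)"
    and euler: "\<And>i x. (\<Sum>l<d. x l * partial l (Q i) x) = real (\<kappa> i) * Q i x"
    and harm: "\<And>i x. (\<Sum>l<d. partial l (partial l (Q i)) x) = 0"
    and bs1: "\<And>x. (\<Sum>i<n1. (Q i x)^2) = (ip d x x)^k1 / 2"
    and bs2: "\<And>x. (\<Sum>i\<in>{n1..<N}. (Q i x)^2) = (ip d x x)^k2 / 2"
    and phiQ: "\<And>z i. z \<in> sph d 1 \<Longrightarrow> \<phi> z i = Q i z"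
    and k12: "k1 \<noteq> k2"
begin

lemma polAQ[simp]: "polA (Q i)"
  using polQ by (rule polAI)

lemma euler2: assumes "h < d"
  shows "(\<Sum>l<d. x l * partial h (partial l (Q i)) x) = (real (\<kappa> i) - 1) * partial h (Q i) x"
proof -
  have "(\<lambda>x. \<Sum>l<d. x l * partial l (Q i) x) = (\<lambda>x. real (\<kappa> i) * Q i x)"
    using euler by auto
  then have "partial h (\<lambda>x. \<Sum>l<d. x l * partial l (Q i) x) x = partial h (\<lambda>x. real (\<kappa> i) * Q i x) x"
    by simp
  then have "partial h (Q i) x + (\<Sum>l<d. x l * partial h (partial l (Q i)) x) = real (\<kappa> i) * partial h (Q i) x"
    using assms by (simp add: sum.distrib)
  then show ?thesis by (simp add: algebra_simps)
qed

definition A :: "(nat \<Rightarrow> real) \<Rightarrow> nat \<Rightarrow> (nat \<Rightarrow> real) \<Rightarrow> real" where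
  "A Y i = (\<lambda>z. \<Sum>l<d. ptan d z Y l * partial l (Q i) z)"

lemma A_expand: "A Y i = (\<lambda>z. \<Sum>l<d. (Y l - (\<Sum>m<d. Y m * z m) * z l) * partial l (Q i) z)"
  by (simp add: A_def ptan_def ip_def)

lemma pol_A: "pol d (A Y i)"
  unfolding A_expand using polQ
  by (intro pol_sum pmul pol_diff pconst pvar pol_partial) auto

lemma polA_A[simp]: "polA (A Y i)"
  using pol_A by (rule polAI)

lemma partial_A: assumes x: "x \<in> sph d 1" and Y: "ip d Y x = 0" and h: "h < d"
  shows "partial h (A Y i) x = - Y h * real (\<kappa> i) * Q i x + (\<Sum>l<d. Y l * partial h (partial l (Q i)) x)"
proof -
  have Y': "(\<Sum>m<d. Y m * x m) = 0" using Y by (simp add: ip_def)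
  have "partial h (A Y i) x = (\<Sum>l<d. - (Y h * (x l * partial l (Q i) x)) + Y l * partial h (partial l (Q i)) x)"
    unfolding A_expand using h Y' by simp (rule sum.cong, auto simp: algebra_simps)
  also have "\<dots> = - (Y h * (\<Sum>l<d. x l * partial l (Q i) x)) + (\<Sum>l<d. Y l * partial h (partial l (Q i)) x)"
    by (simp add: sum.distrib sum_negf sum_distrib_left sum_subtractf)
  finally show ?thesis by (simp add: euler)
qed

lemma E_sq: assumes x: "x \<in> sph d 1" and j: "j < d"
  shows "(\<Sum>h<d. E d x j h * E d x j h) = 1 - x j * x j"
proof -
  have "(\<Sum>h<d. x h * E d x j h) = 0"
    using E_tangent[OF x, of j] by (simp add: ip_def mult.commute)
  then show ?thesis using Ev[OF x j, of "E d x j"] E_eq[OF j, of x j] by simp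
qed

lemma inner_j: assumes x: "x \<in> sph d 1" and j: "j < d"
  shows "(\<Sum>h<d. E d x j h * partial h (A (E d x j) i) x) =
     - real (\<kappa> i) * Q i x * (1 - x j * x j) + partial j (partial j (Q i)) x
     - 2 * x j * (real (\<kappa> i) - 1) * partial j (Q i) x
     + x j * x j * (real (\<kappa> i) - 1) * real (\<kappa> i) * Q i x"
proof -
  let ?k = "real (\<kappa> i)"
  have Y: "ip d (E d x j) x = 0" by (rule E_tangent[OF x])
  have "(\<Sum>h<d. E d x j h * partial h (A (E d x j) i) x) =
     (\<Sum>h<d. E d x j h * (- E d x j h * ?k * Q i x + (\<Sum>l<d. E d x j l * partial h (partial l (Q i)) x)))"
    using partial_A[OF x Y] by simp
  also have "\<dots> = (\<Sum>h<d. E d x j h * (- E d x j h * ?k * Q i x + (partial h (partial j (Q i)) x - x j * ((?k - 1) * partial h (Q i) x))))"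
  proof (rule sum.cong[OF refl])
    fix h assume h: "h \<in> {..<d}"
    have "(\<Sum>l<d. E d x j l * partial h (partial l (Q i)) x) = partial h (partial j (Q i)) x - x j * (\<Sum>l<d. x l * partial h (partial l (Q i)) x)"
      by (rule Ev[OF x j])
    also have "\<dots> = partial h (partial j (Q i)) x - x j * ((?k - 1) * partial h (Q i) x)"
      using euler2 h by simp
    finally show "E d x j h * (- E d x j h * ?k * Q i x + (\<Sum>l<d. E d x j l * partial h (partial l (Q i)) x)) =
        E d x j h * (- E d x j h * ?k * Q i x + (partial h (partial j (Q i)) x - x j * ((?k - 1) * partial h (Q i) x)))"
      by simp
  qed
  also have "\<dots> = - ?k * Q i x * (\<Sum>h<d. E d x j h * E d x j h) + (\<Sum>h<d. E d x j h * partial j (partial h (Q i)) x)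
       - x j * (?k - 1) * (\<Sum>h<d. E d x j h * partial h (Q i) x)"
    using pol_partial_comm[OF polQ, of _ j i]
    by (simp add: algebra_simps sum.distrib sum_subtractf sum_distrib_left sum_negf)
  also have "(\<Sum>h<d. E d x j h * partial j (partial h (Q i)) x) = partial j (partial j (Q i)) x - x j * ((?k - 1) * partial j (Q i) x)"
    using Ev[OF x j, of "\<lambda>h. partial j (partial h (Q i)) x"] euler2[OF j] by simp
  also have "(\<Sum>h<d. E d x j h * partial h (Q i) x) = partial j (Q i) x - x j * (?k * Q i x)"
    using Ev[OF x j, of "\<lambda>h. partial h (Q i) x"] euler by simp
  finally show ?thesis using E_sq[OF x j] by (simp add: algebra_simps)
qed

definition lam :: "nat \<Rightarrow> real" where
  "lam i = real (\<kappa> i) * (real (\<kappa> i) + real d - 2)"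

lemma TR: assumes x: "x \<in> sph d 1"
  shows "(\<Sum>j<d. \<Sum>h<d. ptan d x (E d x j) h * partial h (A (E d x j) i) x) = - lam i * Q i x"
proof -
  let ?k = "real (\<kappa> i)"
  have s1: "(\<Sum>j<d. x j * x j) = 1" using sphD(1)[OF x] by (simp add: ip_def)
  have s2: "(\<Sum>j<d. x j * partial j (Q i) x) = ?k * Q i x" by (rule euler)
  have s3: "(\<Sum>j<d. partial j (partial j (Q i)) x) = 0" by (rule harm)
  have "(\<Sum>j<d. \<Sum>h<d. ptan d x (E d x j) h * partial h (A (E d x j) i) x) =
     (\<Sum>j<d. - ?k * Q i x * (1 - x j * x j) + partial j (partial j (Q i)) x
     - 2 * x j * (?k - 1) * partial j (Q i) x
     + x j * x j * (?k - 1) * ?k * Q i x)"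
    using inner_j[OF x] ptan_E[OF x] by simp
  also have "\<dots> = - ?k * Q i x * (real d - (\<Sum>j<d. x j * x j)) + (\<Sum>j<d. partial j (partial j (Q i)) x)
     - 2 * (?k - 1) * (\<Sum>j<d. x j * partial j (Q i) x) + (?k - 1) * ?k * Q i x * (\<Sum>j<d. x j * x j)"
    by (simp add: sum.distrib sum_subtractf sum_distrib_left algebra_simps sum_negf)
  also have "\<dots> = - lam i * Q i x"
    unfolding s1 s2 s3 lam_def by (simp add: algebra_simps)
  finally show ?thesis .
qed

lemma real_k_km1: "real k * real (k - 1) = real k * (real k - 1)"
  by (cases k) auto

lemma block_id1:
  assumes bs: "\<And>x. (\<Sum>i\<in>B. (Q i x)^2) = (ip d x x)^k / 2"
    and x: "x \<in> sph d 1" and l: "l < d"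
  shows "(\<Sum>i\<in>B. Q i x * partial l (Q i) x) = real k * x l / 2"
proof -
  have ipx: "ip d x x = 1" using sphD(1)[OF x] by simp
  have "(\<lambda>x. \<Sum>i\<in>B. (Q i x)^2) = (\<lambda>x. (ip d x x)^k / 2)" using bs by auto
  then have "partial l (\<lambda>x. \<Sum>i\<in>B. (Q i x)^2) x = partial l (\<lambda>x. (ip d x x)^k / 2) x" by simp
  then have "(\<Sum>i\<in>B. 2 * Q i x * partial l (Q i) x) = real k * x l"
    using l ipx by simp
  then show ?thesis by (simp add: sum_distrib_left[symmetric] mult.assoc)
qed

lemma block_fun1:
  assumes bs: "\<And>x. (\<Sum>i\<in>B. (Q i x)^2) = (ip d x x)^k / 2" and l: "l < d"
  shows "(\<lambda>y. \<Sum>i\<in>B. Q i y * partial l (Q i) y) = (\<lambda>y. real k * (ip d y y)^(k - 1) * y l / 2)"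
proof
  fix y
  have "(\<lambda>x. \<Sum>i\<in>B. (Q i x)^2) = (\<lambda>x. (ip d x x)^k / 2)" using bs by auto
  then have "partial l (\<lambda>x. \<Sum>i\<in>B. (Q i x)^2) y = partial l (\<lambda>x. (ip d x x)^k / 2) y" by simp
  then have "(\<Sum>i\<in>B. 2 * Q i y * partial l (Q i) y) = real k * (ip d y y)^(k - 1) * y l"
    using l by simp
  then show "(\<Sum>i\<in>B. Q i y * partial l (Q i) y) = real k * (ip d y y)^(k - 1) * y l / 2"
    by (simp add: sum_distrib_left[symmetric] mult.assoc)
qed

lemma block_id2_l:
  assumes bs: "\<And>x. (\<Sum>i\<in>B. (Q i x)^2) = (ip d x x)^k / 2"
    and x: "x \<in> sph d 1" and l: "l < d"
  shows "(\<Sum>i\<in>B. partial l (Q i) x * partial l (Q i) x + Q i x * partial l (partial l (Q i)) x)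
     = (real k * (real k - 1) * 2 * x l * x l + real k) / 2"
proof -
  have ipx: "ip d x x = 1" using sphD(1)[OF x] by simp
  have "partial l (\<lambda>y. \<Sum>i\<in>B. Q i y * partial l (Q i) y) x = partial l (\<lambda>y. real k * (ip d y y)^(k - 1) * y l / 2) x"
    using block_fun1[OF bs l] by simp
  then show ?thesis using l ipx by (cases k) (simp_all add: algebra_simps)
qed

lemma block_id2:
  assumes bs: "\<And>x. (\<Sum>i\<in>B. (Q i x)^2) = (ip d x x)^k / 2"
    and x: "x \<in> sph d 1"
  shows "(\<Sum>i\<in>B. \<Sum>l<d. partial l (Q i) x * partial l (Q i) x) = real k * (2 * real k + real d - 2) / 2"
proof -
  have s1: "(\<Sum>j<d. x j * x j) = 1" using sphD(1)[OF x] by (simp add: ip_def)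
  have "(\<Sum>l<d. \<Sum>i\<in>B. partial l (Q i) x * partial l (Q i) x + Q i x * partial l (partial l (Q i)) x)
     = (\<Sum>l<d. (real k * (real k - 1) * 2 * x l * x l + real k) / 2)"
    by (rule sum.cong[OF refl]) (rule block_id2_l[OF bs x], simp)
  also have "\<dots> = (\<Sum>l<d. real k * (real k - 1) * 2 * (x l * x l) + real k) / 2"
    by (simp add: sum_divide_distrib mult.assoc)
  also have "\<dots> = (real k * (real k - 1) * 2 * (\<Sum>l<d. x l * x l) + real k * real d) / 2"
    by (simp add: sum.distrib sum_distrib_left)
  finally have e: "(\<Sum>l<d. \<Sum>i\<in>B. partial l (Q i) x * partial l (Q i) x + Q i x * partial l (partial l (Q i)) x)
     = real k * (2 * real k + real d - 2) / 2"
    unfolding s1 by (simp add: algebra_simps)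
  have "(\<Sum>l<d. \<Sum>i\<in>B. partial l (Q i) x * partial l (Q i) x + Q i x * partial l (partial l (Q i)) x)
     = (\<Sum>i\<in>B. \<Sum>l<d. partial l (Q i) x * partial l (Q i) x) + (\<Sum>i\<in>B. Q i x * (\<Sum>l<d. partial l (partial l (Q i)) x))"
    by (simp add: sum.distrib sum_distrib_left sum.swap[of _ "{..<d}"])
  also have "(\<Sum>i\<in>B. Q i x * (\<Sum>l<d. partial l (partial l (Q i)) x)) = 0"
    using harm by simp
  finally show ?thesis using e by simp
qed

lemma split_N: "(\<Sum>i<N. f i) = (\<Sum>i<n1. f i) + (\<Sum>i\<in>{n1..<N}. f i)"
proof -
  have "{..<N} = {..<n1} \<union> {n1..<N}" using n1N by auto
  moreover have "{..<n1} \<inter> {n1..<N} = {}" by auto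
  ultimately show ?thesis by (simp add: sum.union_disjoint)
qed

lemma sum_if_split: "(\<Sum>i<N. (if i < n1 then a else b) * f i :: real) = a * (\<Sum>i<n1. f i) + b * (\<Sum>i\<in>{n1..<N}. f i)"
proof -
  have "(\<Sum>i<n1. (if i < n1 then a else b) * f i) = (\<Sum>i<n1. a * f i)"
    by (rule sum.cong) auto
  also have "\<dots> = a * (\<Sum>i<n1. f i)" by (simp add: sum_distrib_left)
  moreover have "(\<Sum>i\<in>{n1..<N}. (if i < n1 then a else b) * f i) = (\<Sum>i\<in>{n1..<N}. b * f i)"
    by (rule sum.cong) auto
  moreover have "(\<Sum>i\<in>{n1..<N}. b * f i) = b * (\<Sum>i\<in>{n1..<N}. f i)" by (simp add: sum_distrib_left)
  ultimately show ?thesis unfolding split_N by simp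
qed

lemma W1: assumes x: "x \<in> sph d 1" and l: "l < d"
  shows "(\<Sum>i<N. (if i < n1 then a else b) * (Q i x * partial l (Q i) x)) = (a * real k1 + b * real k2) / 2 * x l"
  unfolding sum_if_split block_id1[OF bs1 x l] block_id1[OF bs2 x l] by (simp add: algebra_simps)

lemma W0: assumes x: "x \<in> sph d 1"
  shows "(\<Sum>i<N. (if i < n1 then a else b) * (Q i x * Q i x)) = (a + b) / 2"
proof -
  have ipx: "ip d x x = 1" using sphD(1)[OF x] by simp
  have q1: "(\<Sum>i<n1. Q i x * Q i x) = 1/2" using bs1[of x] ipx by (simp add: power2_eq_square)
  have q2: "(\<Sum>i\<in>{n1..<N}. Q i x * Q i x) = 1/2" using bs2[of x] ipx by (simp add: power2_eq_square)
  show ?thesis unfolding sum_if_split q1 q2 by simp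
qed

definition lk :: "nat \<Rightarrow> real" where
  "lk k = real k * (real k + real d - 2)"

lemma lam_if: "lam i = (if i < n1 then lk k1 else lk k2)"
  by (simp add: lam_def lk_def kap)

definition \<Lambda> :: real where "\<Lambda> = (lk k1 + lk k2) / 2"

definition \<sigma> :: "nat \<Rightarrow> real" where "\<sigma> i = \<Lambda> - lam i"

lemma sigma_if: "\<sigma> i = (if i < n1 then (lk k2 - lk k1) / 2 else (lk k1 - lk k2) / 2)"
  by (simp add: \<sigma>_def \<Lambda>_def lam_if)

lemma W2: assumes x: "x \<in> sph d 1"
  shows "(\<Sum>i<N. (\<Sum>l<d. partial l (Q i) x * partial l (Q i) x) - real (\<kappa> i) ^ 2 * (Q i x * Q i x)) = \<Lambda>"
proof -
  have ipx: "ip d x x = 1" using sphD(1)[OF x] by simp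
  have q1: "(\<Sum>i<n1. Q i x * Q i x) = 1/2" using bs1[of x] ipx by (simp add: power2_eq_square)
  have q2: "(\<Sum>i\<in>{n1..<N}. Q i x * Q i x) = 1/2" using bs2[of x] ipx by (simp add: power2_eq_square)
  have "(\<Sum>i<N. (\<Sum>l<d. partial l (Q i) x * partial l (Q i) x) - real (\<kappa> i) ^ 2 * (Q i x * Q i x))
    = (\<Sum>i<n1. \<Sum>l<d. partial l (Q i) x * partial l (Q i) x) - real k1 ^ 2 * (\<Sum>i<n1. Q i x * Q i x)
      + ((\<Sum>i\<in>{n1..<N}. \<Sum>l<d. partial l (Q i) x * partial l (Q i) x) - real k2 ^ 2 * (\<Sum>i\<in>{n1..<N}. Q i x * Q i x))"
    unfolding split_N by (simp add: sum_subtractf sum_distrib_left kap)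
  also have "\<dots> = \<Lambda>"
    unfolding block_id2[OF bs1 x] block_id2[OF bs2 x] q1 q2 \<Lambda>_def lk_def
    by (simp add: power2_eq_square) (simp add: field_simps)
  finally show ?thesis .
qed

lemma ptan_sum: "(\<Sum>j\<in>J. ptan n w (v j) i) = ptan n w (\<lambda>i. \<Sum>j\<in>J. v j i) i"
  by (simp add: ptan_def ip_def sum_subtractf sum_distrib_right sum.swap[of _ J])

lemma T1: assumes z: "z \<in> sph d 1"
  shows "dmap d \<phi> z W i = (\<Sum>l<d. ptan d z W l * partial l (Q i) z)"
  unfolding dmap_def by (rule hom0_vdir[OF z polQ]) (simp add: phiQ)

lemma T2: assumes z: "z \<in> sph d 1"
  shows "dmap d \<phi> z (tfield d Y z) i = A Y i z"
  unfolding T1[OF z] tfield_def A_def ptan_idem[OF z] ..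

lemma vdir_zero: "vdir d V x (\<lambda>_. 0) = (\<lambda>i. 0)"
  by (simp add: vdir_def dirderiv_def)

lemma T3: assumes x: "x \<in> sph d 1" and Y: "ip d Y x = 0"
  shows "lc d (tfield d Y) x X = (\<lambda>i. 0)"
proof -
  let ?c = "\<Sum>h<d. ptan d x X h * Y h"
  have Y': "(\<Sum>m<d. Y m * x m) = 0" using Y by (simp add: ip_def)
  have v: "vdir d (hom0 d (tfield d Y)) x X i = - ?c * x i" for i
  proof (cases "i < d")
    case True
    have "vdir d (hom0 d (tfield d Y)) x X i = (\<Sum>h<d. ptan d x X h * partial h (\<lambda>z. Y i - (\<Sum>m<d. Y m * z m) * z i) x)"
      by (rule hom0_vdir[OF x]) (use True in \<open>auto intro!: pol_sum pol_diff pmul pconst pvar simp: tfield_def ptan_def ip_def\<close>)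
    also have "\<dots> = (\<Sum>h<d. ptan d x X h * (- (Y h * x i)))"
      using Y' True by (intro sum.cong) auto
    finally show ?thesis by (simp add: sum_distrib_right sum_negf mult.assoc)
  next
    case False
    have "vdir d (hom0 d (tfield d Y)) x X i = (\<Sum>h<d. ptan d x X h * partial h (\<lambda>z. Y i) x)"
      by (rule hom0_vdir[OF x]) (use False sphD(2) in \<open>auto intro!: pconst simp: tfield_def ptan_def\<close>)
    then show ?thesis using False sphD(2)[OF x, of i] by simp
  qed
  have ipx: "ip d x x = 1" using sphD(1)[OF x] by simp
  have ipc: "ip d (\<lambda>i. - ?c * x i) x = - ?c" using ipx by (simp add: ip_def sum_negf sum_distrib_left[symmetric] mult.assoc)
  have vf: "vdir d (hom0 d (tfield d Y)) x X = (\<lambda>i. - ?c * x i)"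
    by (rule ext) (rule v)
  show ?thesis unfolding lc_def vf ptan_def[of d x "(\<lambda>i. - ?c * x i)"] ipc by simp
qed

lemma T4: assumes x: "x \<in> sph d 1" and Y: "ip d Y x = 0"
  shows "sff d N \<phi> x X Y i = ptan N (\<phi> x) (\<lambda>i. \<Sum>h<d. ptan d x X h * partial h (A Y i) x) i"
proof -
  have "vdir d (hom0 d (\<lambda>z. dmap d \<phi> z (tfield d Y z))) x X = (\<lambda>i. \<Sum>h<d. ptan d x X h * partial h (A Y i) x)"
    by (rule ext, rule hom0_vdir[OF x pol_A]) (simp add: T2)
  moreover have "dmap d \<phi> x (lc d (tfield d Y) x X) i = 0"
    by (simp add: T3[OF x Y] dmap_def vdir_zero)
  ultimately show ?thesis by (simp add: sff_def conn_def)
qed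

lemma T5: assumes x: "x \<in> sph d 1"
  shows "tension d N \<phi> x i = \<sigma> i * Q i x"
proof -
  have "tension d N \<phi> x i = (\<Sum>j<d. sff d N \<phi> x (E d x j) (E d x j) i)"
    by (simp add: tension_def tr_def E_def)
  also have "\<dots> = (\<Sum>j<d. ptan N (\<phi> x) (\<lambda>i. \<Sum>h<d. ptan d x (E d x j) h * partial h (A (E d x j) i) x) i)"
    using T4[OF x E_tangent[OF x]] by simp
  also have "\<dots> = ptan N (\<phi> x) (\<lambda>i. - lam i * Q i x) i"
    unfolding ptan_sum TR[OF x] ..
  also have "\<dots> = - lam i * Q i x + \<Lambda> * Q i x"
  proof -
    have "ip N (\<lambda>i. - lam i * Q i x) (\<phi> x) = - (\<Sum>i<N. (if i < n1 then lk k1 else lk k2) * (Q i x * Q i x))"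
      by (simp add: ip_def phiQ[OF x] lam_if sum_negf[symmetric] mult.assoc)
    also have "\<dots> = - \<Lambda>" unfolding W0[OF x] \<Lambda>_def ..
    finally show ?thesis by (simp add: ptan_def phiQ[OF x])
  qed
  finally show ?thesis by (simp add: \<sigma>_def algebra_simps)
qed

lemma sigmaQ_tangent: assumes z: "z \<in> sph d 1" and P: "ip d P z = 0"
  shows "(\<Sum>h<N. \<sigma> h * (\<Sum>l<d. P l * partial l (Q h) z) * Q h z) = 0"
proof -
  let ?a = "(lk k2 - lk k1) / 2" and ?b = "(lk k1 - lk k2) / 2"
  define C where "C = (?a * real k1 + ?b * real k2) / 2"
  have "(\<Sum>h<N. \<sigma> h * (\<Sum>l<d. P l * partial l (Q h) z) * Q h z)
      = (\<Sum>l<d. P l * (\<Sum>h<N. (if h < n1 then ?a else ?b) * (Q h z * partial l (Q h) z)))"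
    unfolding sigma_if
    by (simp add: sum_distrib_left sum_distrib_right sum.swap[of _ "{..<N}"] algebra_simps)
  also have "\<dots> = (\<Sum>l<d. P l * (C * z l))"
    by (rule sum.cong[OF refl]) (subst W1[OF z], auto simp: C_def)
  also have "\<dots> = C * ip d P z"
    by (simp add: ip_def sum_distrib_left mult.left_commute)
  finally show ?thesis using P by simp
qed

lemma vdir_tension: assumes z: "z \<in> sph d 1"
  shows "vdir d (hom0 d (tension d N \<phi>)) z W = (\<lambda>i. \<sigma> i * (\<Sum>h<d. ptan d z W h * partial h (Q i) z))"
proof
  fix i
  have "vdir d (hom0 d (tension d N \<phi>)) z W i = (\<Sum>h<d. ptan d z W h * partial h (\<lambda>z. \<sigma> i * Q i z) z)"
    by (rule hom0_vdir[OF z]) (auto intro!: pmul pconst polQ simp: T5)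
  then show "vdir d (hom0 d (tension d N \<phi>)) z W i = \<sigma> i * (\<Sum>h<d. ptan d z W h * partial h (Q i) z)"
    by (simp add: sum_distrib_left algebra_simps)
qed

lemma T6: assumes z: "z \<in> sph d 1"
  shows "conn d N \<phi> (tension d N \<phi>) z (tfield d Y z) i = \<sigma> i * A Y i z"
proof -
  have v: "vdir d (hom0 d (tension d N \<phi>)) z (tfield d Y z) = (\<lambda>i. \<sigma> i * A Y i z)"
    unfolding vdir_tension[OF z] tfield_def ptan_idem[OF z] A_def ..
  have "ip N (\<lambda>i. \<sigma> i * A Y i z) (\<phi> z) = (\<Sum>h<N. \<sigma> h * (\<Sum>l<d. ptan d z Y l * partial l (Q h) z) * Q h z)"
    by (simp add: ip_def phiQ[OF z] A_def)
  also have "\<dots> = 0" by (rule sigmaQ_tangent[OF z ptan_tangent[OF z]])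
  finally show ?thesis unfolding conn_def v by (simp add: ptan_def)
qed

lemma pol_sigmaA: "pol d (\<lambda>z. \<sigma> i * A Y i z)"
  by (intro pmul pconst pol_A)

lemma T7: assumes x: "x \<in> sph d 1" and Y: "ip d Y x = 0"
  shows "hess_sec d N \<phi> (tension d N \<phi>) x X Y i =
     ptan N (\<phi> x) (\<lambda>i. \<sigma> i * (\<Sum>h<d. ptan d x X h * partial h (A Y i) x)) i"
proof -
  have v: "vdir d (hom0 d (\<lambda>z. conn d N \<phi> (tension d N \<phi>) z (tfield d Y z))) x X
      = (\<lambda>i. \<sigma> i * (\<Sum>h<d. ptan d x X h * partial h (A Y i) x))"
  proof
    fix i
    have "vdir d (hom0 d (\<lambda>z. conn d N \<phi> (tension d N \<phi>) z (tfield d Y z))) x X i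
       = (\<Sum>h<d. ptan d x X h * partial h (\<lambda>z. \<sigma> i * A Y i z) x)"
      by (rule hom0_vdir[OF x pol_sigmaA]) (simp add: T6)
    then show "vdir d (hom0 d (\<lambda>z. conn d N \<phi> (tension d N \<phi>) z (tfield d Y z))) x X i
       = \<sigma> i * (\<Sum>h<d. ptan d x X h * partial h (A Y i) x)"
      by (simp add: sum_distrib_left algebra_simps)
  qed
  have c0: "conn d N \<phi> (tension d N \<phi>) x (lc d (tfield d Y) x X) i = 0"
    unfolding T3[OF x Y] conn_def vdir_zero by (simp add: ptan_def ip_def)
  show ?thesis unfolding hess_sec_def c0 conn_def[of d N \<phi> "(\<lambda>z. conn d N \<phi> (tension d N \<phi>) z (tfield d Y z))"] v by simp
qed

definition M :: real where "M = ((lk k2 - lk k1) / 2 * lk k1 + (lk k1 - lk k2) / 2 * lk k2) / 2"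

lemma T8: assumes x: "x \<in> sph d 1"
  shows "tr d x (hess_sec d N \<phi> (tension d N \<phi>) x) i = - \<sigma> i * lam i * Q i x + M * Q i x"
proof -
  have "tr d x (hess_sec d N \<phi> (tension d N \<phi>) x) i = (\<Sum>j<d. hess_sec d N \<phi> (tension d N \<phi>) x (E d x j) (E d x j) i)"
    by (simp add: tr_def E_def)
  also have "\<dots> = (\<Sum>j<d. ptan N (\<phi> x) (\<lambda>i. \<sigma> i * (\<Sum>h<d. ptan d x (E d x j) h * partial h (A (E d x j) i) x)) i)"
    using T7[OF x E_tangent[OF x]] by simp
  also have "\<dots> = ptan N (\<phi> x) (\<lambda>i. \<sigma> i * (- lam i * Q i x)) i"
    unfolding ptan_sum sum_distrib_left[symmetric] TR[OF x] ..
  also have "\<dots> = - \<sigma> i * lam i * Q i x + M * Q i x"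
  proof -
    have "ip N (\<lambda>i. \<sigma> i * (- lam i * Q i x)) (\<phi> x)
       = (\<Sum>i<N. - ((if i < n1 then (lk k2 - lk k1) / 2 * lk k1 else (lk k1 - lk k2) / 2 * lk k2) * (Q i x * Q i x)))"
      unfolding ip_def by (rule sum.cong) (auto simp: phiQ[OF x] lam_if sigma_if)
    also have "\<dots> = - (\<Sum>i<N. (if i < n1 then (lk k2 - lk k1) / 2 * lk k1 else (lk k1 - lk k2) / 2 * lk k2) * (Q i x * Q i x))"
      by (simp add: sum_negf)
    also have "\<dots> = - M" unfolding W0[OF x] M_def ..
    finally show ?thesis by (simp add: ptan_def phiQ[OF x] algebra_simps)
  qed
  finally show ?thesis .
qed

lemma T9: assumes x: "x \<in> sph d 1"
  shows "tr d x (\<lambda>X Y. curv_sph N (dmap d \<phi> x X) (tension d N \<phi> x) (dmap d \<phi> x Y)) i = - \<Lambda> * (\<sigma> i * Q i x)"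
proof -
  define D where "D j = (\<lambda>i. \<Sum>h<d. E d x j h * partial h (Q i) x)" for j
  have dm: "dmap d \<phi> x (E d x j) = D j" for j
    unfolding D_def by (rule ext) (simp add: T1[OF x] ptan_E[OF x])
  have tau: "tension d N \<phi> x = (\<lambda>i. \<sigma> i * Q i x)"
    by (rule ext) (simp add: T5[OF x])
  have ip0: "ip N (tension d N \<phi> x) (D j) = 0" for j
  proof -
    have "ip N (tension d N \<phi> x) (D j) = (\<Sum>h<N. \<sigma> h * (\<Sum>l<d. E d x j l * partial l (Q h) x) * Q h x)"
      unfolding tau D_def ip_def by (simp add: algebra_simps)
    also have "\<dots> = 0" by (rule sigmaQ_tangent[OF x E_tangent[OF x]])
    finally show ?thesis .
  qed
  have inner: "(\<Sum>j<d. D j i * D j i) = (\<Sum>l<d. partial l (Q i) x * partial l (Q i) x) - real (\<kappa> i) ^ 2 * (Q i x * Q i x)" for i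
  proof -
    have s1: "(\<Sum>j<d. x j * x j) = 1" using sphD(1)[OF x] by (simp add: ip_def)
    have "(\<Sum>j<d. D j i * D j i) = (\<Sum>j<d. (partial j (Q i) x - x j * (real (\<kappa> i) * Q i x)) * (partial j (Q i) x - x j * (real (\<kappa> i) * Q i x)))"
      by (rule sum.cong[OF refl]) (simp add: D_def Ev[OF x] euler)
    also have "\<dots> = (\<Sum>j<d. partial j (Q i) x * partial j (Q i) x) - 2 * real (\<kappa> i) * Q i x * (\<Sum>j<d. x j * partial j (Q i) x)
        + (real (\<kappa> i) * Q i x)^2 * (\<Sum>j<d. x j * x j)"
      by (simp add: algebra_simps power2_eq_square sum.distrib sum_subtractf sum_distrib_left)
    also have "\<dots> = (\<Sum>l<d. partial l (Q i) x * partial l (Q i) x) - real (\<kappa> i) ^ 2 * (Q i x * Q i x)"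
      unfolding s1 euler by (simp add: algebra_simps power2_eq_square)
    finally show ?thesis .
  qed
  have "(\<Sum>j<d. ip N (D j) (D j)) = (\<Sum>i<N. \<Sum>j<d. D j i * D j i)"
    unfolding ip_def by (rule sum.swap)
  also have "\<dots> = \<Lambda>" unfolding inner by (rule W2[OF x])
  finally have ipD: "(\<Sum>j<d. ip N (D j) (D j)) = \<Lambda>" .
  have "tr d x (\<lambda>X Y. curv_sph N (dmap d \<phi> x X) (tension d N \<phi> x) (dmap d \<phi> x Y)) i
      = - (\<Sum>j<d. ip N (D j) (D j)) * tension d N \<phi> x i"
    unfolding tr_def E_def[symmetric] dm curv_sph_def ip0 by (simp add: sum_negf sum_distrib_right)
  then show ?thesis unfolding ipD T5[OF x] by simp
qed

lemma T10: assumes x: "x \<in> sph d 1"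
  shows "bitension d N \<phi> x i = 0"
proof -
  have "bitension d N \<phi> x i = (- \<sigma> i * lam i * Q i x + M * Q i x) + \<Lambda> * (\<sigma> i * Q i x)"
    unfolding bitension_def rough_lap_def T8[OF x] T9[OF x] by simp
  also have "\<dots> = 0"
    unfolding sigma_if lam_if M_def \<Lambda>_def by (simp add: field_simps)
  finally show ?thesis .
qed

lemma lk_mono: assumes "a < b" shows "lk a < lk b"
proof -
  have c: "real d - 2 \<ge> 0" using d2 by simp
  have "0 < (real b - real a) * (real b + real a + (real d - 2))"
    using assms c by (intro mult_pos_pos) auto
  then show ?thesis unfolding lk_def by (simp add: algebra_simps)
qed

lemma lk_neq: "lk k1 \<noteq> lk k2"
  using k12 lk_mono[of k1 k2] lk_mono[of k2 k1] by (cases "k1 < k2") auto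

theorem bih_main: "proper_biharmonic d N \<phi>"
proof -
  have A1: "\<forall>x\<in>sph d 1. \<phi> x \<in> sph N 1"
  proof
    fix x assume x: "x \<in> sph d 1"
    have "ip N (\<phi> x) (\<phi> x) = (\<Sum>i<N. (if i < n1 then 1 else 1) * (Q i x * Q i x))"
      by (simp add: ip_def phiQ[OF x])
    also have "\<dots> = 1" unfolding W0[OF x] by simp
    finally show "\<phi> x \<in> sph N 1" using Qzero by (auto simp: sph_def phiQ[OF x])
  qed
  have A2: "\<forall>x\<in>sph d 1. \<forall>i<N. bitension d N \<phi> x i = 0"
    using T10 by blast
  define x0 where "x0 = unitvec 0"
  have x0: "x0 \<in> sph d 1" using d2 by (simp add: sph_def x0_def unitvec_def ip_def)
  have "\<exists>i<n1. Q i x0 \<noteq> 0"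
  proof (rule ccontr)
    assume "\<not> (\<exists>i<n1. Q i x0 \<noteq> 0)"
    then have "(\<Sum>i<n1. (Q i x0)^2) = 0" by simp
    moreover have "ip d x0 x0 = 1" using sphD(1)[OF x0] by simp
    ultimately show False using bs1[of x0] by simp
  qed
  then obtain i where i: "i < n1" "Q i x0 \<noteq> 0" by blast
  have "tension d N \<phi> x0 i \<noteq> 0"
    unfolding T5[OF x0] sigma_if using i lk_neq by simp
  then have A3: "\<exists>x\<in>sph d 1. \<exists>i<N. tension d N \<phi> x i \<noteq> 0"
    using x0 i n1N by (intro bexI[of _ x0] exI[of _ i]) auto
  show ?thesis unfolding proper_biharmonic_def using A1 A2 A3 by blast
qed

end


lemma partial_zero_fun: "partial j (\<lambda>x. 0) = (\<lambda>x. 0)"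
  by (rule ext) simp

lemma hp_form: "hom_poly d k p \<Longrightarrow> \<exists>c. p = (\<lambda>x. \<Sum>\<alpha>\<in>multi_idx d k. c \<alpha> * (\<Prod>i<d. x i ^ \<alpha> i))"
  unfolding hom_poly_def by (auto simp: fun_eq_iff)

lemma hp_pol: "hom_poly d k p \<Longrightarrow> pol d p"
  by (drule hp_form) (auto intro!: pol_sum pmul pconst pol_prod pol_power pvar)

lemma hp_scale: assumes "hom_poly d k p" shows "p (\<lambda>i. t * x i) = t ^ k * p x"
proof -
  obtain c where c: "p = (\<lambda>x. \<Sum>\<alpha>\<in>multi_idx d k. c \<alpha> * (\<Prod>i<d. x i ^ \<alpha> i))"
    using hp_form[OF assms] by blast
  have "(\<Sum>\<alpha>\<in>multi_idx d k. c \<alpha> * (\<Prod>i<d. (t * x i) ^ \<alpha> i)) = (\<Sum>\<alpha>\<in>multi_idx d k. t ^ k * (c \<alpha> * (\<Prod>i<d. x i ^ \<alpha> i)))"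
  proof (rule sum.cong[OF refl])
    fix \<alpha> assume a: "\<alpha> \<in> multi_idx d k"
    have "(\<Prod>i<d. (t * x i) ^ \<alpha> i) = (\<Prod>i<d. t ^ \<alpha> i) * (\<Prod>i<d. x i ^ \<alpha> i)"
      by (simp add: power_mult_distrib prod.distrib)
    also have "(\<Prod>i<d. t ^ \<alpha> i) = t ^ k" using a by (simp add: multi_idx_def power_sum[symmetric])
    finally show "c \<alpha> * (\<Prod>i<d. (t * x i) ^ \<alpha> i) = t ^ k * (c \<alpha> * (\<Prod>i<d. x i ^ \<alpha> i))" by simp
  qed
  then show ?thesis using c by (simp add: sum_distrib_left)
qed

lemma hp_local: assumes "hom_poly d k p" and "\<And>i. i < d \<Longrightarrow> x i = y i" shows "p x = p y"
proof -
  obtain c where c: "p = (\<lambda>x. \<Sum>\<alpha>\<in>multi_idx d k. c \<alpha> * (\<Prod>i<d. x i ^ \<alpha> i))"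
    using hp_form[OF assms(1)] by blast
  show ?thesis unfolding c using assms(2) by simp
qed

lemma hp_euler: assumes hp: "hom_poly d k p"
  shows "(\<Sum>l<d. x l * partial l p x) = real k * p x"
proof -
  have pd: "pol d p" by (rule hp_pol[OF hp])
  have "((\<lambda>t. p (\<lambda>i. t * x i)) has_real_derivative (\<Sum>i<d. x i * partial i p ((\<lambda>t. \<lambda>i. t * x i) 1))) (at 1)"
    by (rule pol_chain[OF pd]) (auto intro!: derivative_eq_intros)
  then have d1: "((\<lambda>t. p (\<lambda>i. t * x i)) has_real_derivative (\<Sum>i<d. x i * partial i p x)) (at 1)"
    by simp
  have "((\<lambda>t. t ^ k * p x) has_real_derivative real k * p x) (at 1)"
    by (auto intro!: derivative_eq_intros)
  moreover have "(\<lambda>t. p (\<lambda>i. t * x i)) = (\<lambda>t. t ^ k * p x)"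
    using hp_scale[OF hp] by auto
  ultimately show ?thesis using d1 DERIV_unique by metis
qed

lemma lsm_cmul: "lsm f \<Longrightarrow> partial j (\<lambda>x. c * f x) = (\<lambda>y. c * partial j f y)"
  by (rule ext) simp

lemma hp_sumsq:
  assumes hp: "\<And>i. i < n \<Longrightarrow> hom_poly d k (P i)" and d: "d \<ge> 1"
    and S: "\<forall>x\<in>sph d 1. (\<Sum>i<n. (c * P i x)^2) = 1/2"
  shows "(\<Sum>i<n. (c * P i x)^2) = (ip d x x)^k / 2"
proof -
  define r where "r = sqrt (ip d x x)"
  have ip0: "ip d x x \<ge> 0" by (simp add: ip_def sum_nonneg)
  define z where "z = (if ip d x x > 0 then radproj d x else unitvec 0)"
  have z: "z \<in> sph d 1"
    using radproj_in_sph d by (auto simp: z_def sph_def unitvec_def ip_def)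
  have xz: "x i = r * z i" if i: "i < d" for i
  proof (cases "ip d x x > 0")
    case True
    then show ?thesis using i by (simp add: z_def r_def radproj_def)
  next
    case False
    then have "ip d x x = 0" using ip0 by simp
    then have "(\<Sum>i<d. x i * x i) = 0" by (simp add: ip_def)
    then have "x i * x i = 0" using i by (subst (asm) sum_nonneg_eq_0_iff) auto
    then show ?thesis using False ip0 by (simp add: r_def)
  qed
  have "P i x = r ^ k * P i z" if i: "i < n" for i
  proof -
    have "P i x = P i (\<lambda>j. r * z j)" by (rule hp_local[OF hp[OF i]]) (simp add: xz)
    also have "\<dots> = r ^ k * P i z" by (rule hp_scale[OF hp[OF i]])
    finally show ?thesis .
  qed
  then have "(\<Sum>i<n. (c * P i x)^2) = (r^2)^k * (\<Sum>i<n. (c * P i z)^2)"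
    by (simp add: sum_distrib_left power_mult_distrib algebra_simps power_mult[symmetric] mult.commute[of 2 k])
  also have "\<dots> = (ip d x x)^k / 2" using S z ip0 by (simp add: r_def)
  finally show ?thesis .
qed

lemma hp_harm_cmul: assumes "hom_poly d k p" "harmonic_fun d p"
  shows "(\<Sum>l<d. partial l (partial l (\<lambda>x. c * p x)) x) = 0"
proof -
  have pd: "pol d p" by (rule hp_pol[OF assms(1)])
  have "partial l (partial l (\<lambda>x. c * p x)) x = c * partial l (partial l p) x" for l
  proof -
    have "partial l (\<lambda>x. c * p x) = (\<lambda>y. c * partial l p y)" by (rule lsm_cmul[OF pol_lsm[OF pd]])
    moreover have "partial l (\<lambda>y. c * partial l p y) = (\<lambda>y. c * partial l (partial l p) y)"
      by (rule lsm_cmul[OF pol_lsm[OF pol_partial[OF pd]]])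
    ultimately show ?thesis by simp
  qed
  then have "(\<Sum>l<d. partial l (partial l (\<lambda>x. c * p x)) x) = c * (\<Sum>l<d. partial l (partial l p) x)"
    by (simp add: sum_distrib_left)
  also have "\<dots> = 0" using assms(2) by (simp add: harmonic_fun_def)
  finally show ?thesis .
qed

lemma hp_euler_cmul: assumes "hom_poly d k p"
  shows "(\<Sum>l<d. x l * partial l (\<lambda>x. c * p x) x) = real k * (c * p x)"
proof -
  have pd: "pol d p" by (rule hp_pol[OF assms(1)])
  have "(\<Sum>l<d. x l * partial l (\<lambda>x. c * p x) x) = c * (\<Sum>l<d. x l * partial l p x)"
    using pol_lsm[OF pd] by (simp add: sum_distrib_left algebra_simps)
  then show ?thesis using hp_euler[OF assms] by simp
qed

lemma onb_choice:
  assumes "sph_harm_onb d k fs"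
  obtains P where "\<And>i. i < length fs \<Longrightarrow> hom_poly d k (P i) \<and> harmonic_fun d (P i) \<and> (\<forall>x\<in>sph d 1. (fs ! i) x = P i x)"
proof -
  have "\<forall>i. \<exists>p. i < length fs \<longrightarrow> hom_poly d k p \<and> harmonic_fun d p \<and> (\<forall>x\<in>sph d 1. (fs ! i) x = p x)"
  proof
    fix i
    show "\<exists>p. i < length fs \<longrightarrow> hom_poly d k p \<and> harmonic_fun d p \<and> (\<forall>x\<in>sph d 1. (fs ! i) x = p x)"
    proof (cases "i < length fs")
      case True
      then have "fs ! i \<in> sph_harm d k" using assms nth_mem by (auto simp: sph_harm_onb_def)
      then show ?thesis by (auto simp: sph_harm_def)
    qed simp
  qed
  then obtain P where "\<forall>i. i < length fs \<longrightarrow> hom_poly d k (P i) \<and> harmonic_fun d (P i) \<and> (\<forall>x\<in>sph d 1. (fs ! i) x = P i x)"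
    using choice by metis
  then show ?thesis using that by blast
qed

theorem mainTheorem11:
  fixes m k1 k2 :: nat and c1 c2 :: real
    and fs1 fs2 :: "((nat \<Rightarrow> real) \<Rightarrow> real) list"
  assumes "m \<ge> 1" and "k1 \<noteq> k2"
    and "sph_harm_onb (m + 1) k1 fs1" and "sph_harm_onb (m + 1) k2 fs2"
    and "c1 > 0" and "\<forall>x\<in>sph (m + 1) 1. (\<Sum>i<length fs1. (c1 * (fs1 ! i) x) ^ 2) = 1 / 2"
    and "c2 > 0" and "\<forall>x\<in>sph (m + 1) 1. (\<Sum>i<length fs2. (c2 * (fs2 ! i) x) ^ 2) = 1 / 2"
  shows "proper_biharmonic (m + 1) (length fs1 + length fs2) (pair_map c1 fs1 c2 fs2)"
proof -
  obtain P1 where P1: "\<And>i. i < length fs1 \<Longrightarrow> hom_poly (m+1) k1 (P1 i) \<and> harmonic_fun (m+1) (P1 i) \<and> (\<forall>x\<in>sph (m+1) 1. (fs1 ! i) x = P1 i x)"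
    using onb_choice[OF assms(3)] by blast
  obtain P2 where P2: "\<And>i. i < length fs2 \<Longrightarrow> hom_poly (m+1) k2 (P2 i) \<and> harmonic_fun (m+1) (P2 i) \<and> (\<forall>x\<in>sph (m+1) 1. (fs2 ! i) x = P2 i x)"
    using onb_choice[OF assms(4)] by blast
  define n1 where "n1 = length fs1"
  define n2 where "n2 = length fs2"
  define N where "N = n1 + n2"
  define Q where "Q i = (if i < n1 then (\<lambda>x. c1 * P1 i x) else if i < N then (\<lambda>x. c2 * P2 (i - n1) x) else (\<lambda>x. 0))" for i
  define \<kappa> where "\<kappa> i = (if i < n1 then k1 else k2)" for i
  have S1: "\<forall>x\<in>sph (m+1) 1. (\<Sum>i<n1. (c1 * P1 i x)^2) = 1/2"
    using assms(6) P1 by (simp add: n1_def)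
  have S2: "\<forall>x\<in>sph (m+1) 1. (\<Sum>i<n2. (c2 * P2 i x)^2) = 1/2"
    using assms(8) P2 by (simp add: n2_def)
  have Qc: "(\<exists>c p. Q i = (\<lambda>x. c * p x) \<and> hom_poly (m+1) (\<kappa> i) p \<and> harmonic_fun (m+1) p) \<or> Q i = (\<lambda>x. 0)" for i
  proof (cases "i < n1")
    case True
    then show ?thesis using P1[of i] by (auto simp: Q_def \<kappa>_def n1_def)
  next
    case False
    show ?thesis
    proof (cases "i < N")
      case True
      have "i - n1 < n2" using True False by (simp add: N_def)
      then show ?thesis using P2[of "i - n1"] True False by (auto simp: Q_def \<kappa>_def n2_def)
    next
      case False2: False
      then show ?thesis using False by (simp add: Q_def)
    qed
  qed
  interpret bih "m+1" N n1 Q \<kappa> "pair_map c1 fs1 c2 fs2" k1 k2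
  proof
    show "2 \<le> m + 1" using assms(1) by simp
    show "n1 \<le> N" by (simp add: N_def)
    show "pol (m + 1) (Q i)" for i
      using Qc[of i]
    proof
      assume "\<exists>c p. Q i = (\<lambda>x. c * p x) \<and> hom_poly (m+1) (\<kappa> i) p \<and> harmonic_fun (m+1) p"
      then obtain c p where e: "Q i = (\<lambda>x. c * p x)" and h: "hom_poly (m+1) (\<kappa> i) p" by blast
      show ?thesis unfolding e by (rule pmul[OF pconst hp_pol[OF h]])
    qed (simp add: pconst)
    show "N \<le> i \<Longrightarrow> Q i = (\<lambda>x. 0)" for i by (simp add: Q_def N_def)
    show "\<kappa> i = (if i < n1 then k1 else k2)" for i by (simp add: \<kappa>_def)
    show "(\<Sum>l<m + 1. x l * partial l (Q i) x) = real (\<kappa> i) * Q i x" for i x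
      using Qc[of i]
    proof
      assume "\<exists>c p. Q i = (\<lambda>x. c * p x) \<and> hom_poly (m+1) (\<kappa> i) p \<and> harmonic_fun (m+1) p"
      then obtain c p where e: "Q i = (\<lambda>x. c * p x)" and h: "hom_poly (m+1) (\<kappa> i) p" by blast
      show ?thesis unfolding e by (rule hp_euler_cmul[OF h])
    qed simp
    show "(\<Sum>l<m + 1. partial l (partial l (Q i)) x) = 0" for i x
      using Qc[of i]
    proof
      assume "\<exists>c p. Q i = (\<lambda>x. c * p x) \<and> hom_poly (m+1) (\<kappa> i) p \<and> harmonic_fun (m+1) p"
      then obtain c p where e: "Q i = (\<lambda>x. c * p x)" and h: "hom_poly (m+1) (\<kappa> i) p" "harmonic_fun (m+1) p" by blast
      show ?thesis unfolding e by (rule hp_harm_cmul[OF h])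
    qed (simp add: partial_zero_fun)
    show "(\<Sum>i<n1. (Q i x)\<^sup>2) = ip (m + 1) x x ^ k1 / 2" for x
    proof -
      have "(\<Sum>i<n1. (Q i x)\<^sup>2) = (\<Sum>i<n1. (c1 * P1 i x)\<^sup>2)" by (simp add: Q_def)
      also have "\<dots> = ip (m + 1) x x ^ k1 / 2"
        by (rule hp_sumsq[OF _ _ S1]) (use P1 in \<open>auto simp: n1_def\<close>)
      finally show ?thesis .
    qed
    show "(\<Sum>i\<in>{n1..<N}. (Q i x)\<^sup>2) = ip (m + 1) x x ^ k2 / 2" for x
    proof -
      have "(\<Sum>i\<in>{n1..<N}. (Q i x)\<^sup>2) = (\<Sum>i\<in>{0+n1..<n2+n1}. (Q i x)\<^sup>2)" by (simp add: N_def add.commute)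
      also have "\<dots> = (\<Sum>i\<in>{0..<n2}. (Q (i + n1) x)\<^sup>2)" by (rule sum.shift_bounds_nat_ivl)
      also have "\<dots> = (\<Sum>i<n2. (c2 * P2 i x)\<^sup>2)" by (simp add: Q_def N_def atLeast0LessThan)
      also have "\<dots> = ip (m + 1) x x ^ k2 / 2"
        by (rule hp_sumsq[OF _ _ S2]) (use P2 in \<open>auto simp: n2_def\<close>)
      finally show ?thesis .
    qed
    show "z \<in> sph (m + 1) 1 \<Longrightarrow> pair_map c1 fs1 c2 fs2 z i = Q i z" for z i
      using P1[of i] P2[of "i - n1"] by (auto simp: pair_map_def Q_def N_def n1_def n2_def)
    show "k1 \<noteq> k2" by (rule assms(2))
  qed
  show ?thesis using bih_main by (simp add: N_def n1_def n2_def)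
qed


end
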